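(* Fix $k\in[m-1]$ and let $q_k(D)=h_{(k)}(D)-h_{(k+1)}(D)$. Let $\hat q_k$ be a randomized release of $q_k$ which, as a mechanism, obeys $(\alpha,\epsilon_{gap}(\alpha))$-RDP, and which satisfies $\Pr[\hat q_k\ge q_k]\le\delta_t$ for every dataset (probability over the randomness of $\hat q_k$ only). Then the mechanism that outputs the set of top-$k$ indices $\{i_{(1)},\dots,i_{(k)}\}$ directly (without noise) if $\hat q_k>1$, and outputs $\perp$ otherwise, satisfies $\delta_t$-approximate-$(\alpha,\epsilon_{gap}(\alpha))$-RDP.
   Context: Setting: a dataset consists of users; there are $m$ candidates and each user votes $1$ for an arbitrary subset of candidates; $h_j(D)$ is the number of users voting for candidate $j$. Datasets are neighboring if one is obtained from the other by adding or removing one user. $h_{(1)}\ge\dots\ge h_{(m)}$ are the sorted counts with corresponding candidates $i_{(1)},\dots,i_{(m)}$. Rényi divergence: $\mathbb{D}_\alpha(P\|Q)=\frac{1}{\alpha-1}\log\mathbb{E}_{o\sim Q}[(P(o)/Q(o))^\alpha]$; $\mathcal{M}$ is $(\alpha,\epsilon(\alpha))$-RDP if $\mathbb{D}_\alpha(\mathcal{M}(D)\|\mathcal{M}(D'))\le\epsilon(\alpha)$ for all neighbors. $\mathcal{M}$ is $\delta$-approximate-$(\alpha,\epsilon(\alpha))$-RDP if for all neighbors $D,D'$ there exist events $E$ (depending on $\mathcal{M}(D)$) and $E'$ (depending on $\mathcal{M}(D')$) with $\Pr[E]\ge1-\delta$, $\Pr[E']\ge1-\delta$ and $\mathbb{D}_\alpha(\mathcal{M}(D)|E\|\mathcal{M}(D')|E')\le\epsilon(\alpha)$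 for all $\alpha\ge1$. *)

theory Defs
  imports "HOL-Probability.Probability" "HOL-Library.Multiset"
begin

(* Candidates are 0..<m; a user is the set of candidates it votes for;
   a dataset is a multiset of users. *)
definition valid_ds :: "nat \<Rightarrow> nat set multiset \<Rightarrow> bool" where
  "valid_ds m D \<longleftrightarrow> (\<forall>u\<in>#D. u \<subseteq> {..<m})"

definition neighbors :: "nat \<Rightarrow> nat set multiset \<Rightarrow> nat set multiset \<Rightarrow> bool" where
  "neighbors m D D' \<longleftrightarrow> valid_ds m D \<and> valid_ds m D' \<and>
     ((\<exists>u. D' = D + {#u#}) \<or> (\<exists>u. D = D' + {#u#}))"

definition hcount :: "nat set multiset \<Rightarrow> nat \<Rightarrow> nat" where
  "hcount D j = size (filter_mset (\<lambda>u. j \<in> u) D)"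

(* candidates in decreasing order of count (ties broken by smaller index,
   since sort_key is a stable sort and [0..<m] is increasing):
   the list i_(1), ..., i_(m) (0-based list) *)
definition ranked :: "nat \<Rightarrow> nat set multiset \<Rightarrow> nat list" where
  "ranked m D = sort_key (\<lambda>j. - int (hcount D j)) [0..<m]"

definition hsorted :: "nat \<Rightarrow> nat set multiset \<Rightarrow> nat \<Rightarrow> nat" where
  "hsorted m D k = hcount D (ranked m D ! (k - 1))"

definition gap :: "nat \<Rightarrow> nat \<Rightarrow> nat set multiset \<Rightarrow> real" where
  "gap m k D = real (hsorted m D k) - real (hsorted m D (k + 1))"

definition topk :: "nat \<Rightarrow> nat \<Rightarrow> nat set multiset \<Rightarrow> nat set" where
  "topk m k D = set (take k (ranked m D))"

definition renyi_div :: "real \<Rightarrow> 'a measure \<Rightarrow> 'a measure \<Rightarrow> ereal" where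
  "renyi_div \<alpha> P Q =
    (if sets P = sets Q \<and> absolutely_continuous Q P then
       (let f = (\<lambda>x. enn2real (RN_deriv Q P x)) in
        if \<alpha> = 1 then
          (if integrable P (\<lambda>x. ln (f x)) then ereal (\<integral>x. ln (f x) \<partial>P) else \<infinity>)
        else
          (let I = (\<integral>\<^sup>+ x. ennreal (f x powr \<alpha>) \<partial>Q) in
           if I = \<infinity> then \<infinity> else ereal (ln (enn2real I) / (\<alpha> - 1))))
     else \<infinity>)"

(* A mechanism: dataset \<Rightarrow> (randomness \<Rightarrow> output), randomness distributed by
   the probability space M, outputs measured in the space N. *)
definition rdp :: "'w measure \<Rightarrow> 'b measure \<Rightarrow> (nat set multiset \<Rightarrow> nat set multiset \<Rightarrow> bool)
    \<Rightarrow> (nat set multiset \<Rightarrow> 'w \<Rightarrow> 'b) \<Rightarrow> real \<Rightarrow> real \<Rightarrow> bool" where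
  "rdp M N nb mech \<alpha> \<epsilon> \<longleftrightarrow>
     (\<forall>D D'. nb D D' \<longrightarrow> renyi_div \<alpha> (distr M N (mech D)) (distr M N (mech D')) \<le> ereal \<epsilon>)"

(* delta-approximate-(alpha, eps(alpha))-RDP; the events are events of the
   mechanism's randomness, conditioning = uniform_measure. *)
definition approx_rdp :: "'w measure \<Rightarrow> 'b measure \<Rightarrow> (nat set multiset \<Rightarrow> nat set multiset \<Rightarrow> bool)
    \<Rightarrow> (nat set multiset \<Rightarrow> 'w \<Rightarrow> 'b) \<Rightarrow> real \<Rightarrow> (real \<Rightarrow> real) \<Rightarrow> bool" where
  "approx_rdp M N nb mech \<delta> \<epsilon> \<longleftrightarrow>
     (\<forall>D D'. nb D D' \<longrightarrow>
        (\<exists>E E'. E \<in> sets M \<and> E' \<in> sets M \<and>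
           measure M E \<ge> 1 - \<delta> \<and> measure M E' \<ge> 1 - \<delta> \<and>
           (\<forall>\<alpha>\<ge>1. renyi_div \<alpha> (distr (uniform_measure M E) N (mech D))
                                 (distr (uniform_measure M E') N (mech D')) \<le> ereal (\<epsilon> \<alpha>))))"

end

theory Submission
  imports Defs
begin

lemma bern_aux:
  fixes x \<alpha> :: real assumes "x \<ge> 0" "\<alpha> \<ge> 1"
  shows "\<alpha> * x \<le> x powr \<alpha> + \<alpha> - 1"
proof (cases "x = 0")
  case True then show ?thesis using assms by simp
next
  case False
  then have xp: "x > 0" using assms by simp
  have "(x powr \<alpha>) powr (1/\<alpha>) * 1 powr (1 - 1/\<alpha>) \<le> (1/\<alpha>) * x powr \<alpha> + (1 - 1/\<alpha>) * 1"
    using assms xp by (intro Youngs_inequality_0) (auto simp: field_simps)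
  moreover have "(x powr \<alpha>) powr (1/\<alpha>) = x" using assms xp by (simp add: powr_powr)
  ultimately have "x \<le> (1/\<alpha>) * x powr \<alpha> + (1 - 1/\<alpha>)" by simp
  then have "\<alpha> * x \<le> \<alpha> * ((1/\<alpha>) * x powr \<alpha> + (1 - 1/\<alpha>))" using assms by simp
  also have "\<dots> = x powr \<alpha> + \<alpha> - 1" using assms by (simp add: field_simps)
  finally show ?thesis .
qed

lemma bern:
  fixes t c \<alpha> :: real assumes "t \<ge> 0" "c > 0" "\<alpha> \<ge> 1"
  shows "\<alpha> * c powr (\<alpha> - 1) * t \<le> t powr \<alpha> + (\<alpha> - 1) * c powr \<alpha>"
proof -
  have "\<alpha> * (t/c) \<le> (t/c) powr \<alpha> + \<alpha> - 1" using assms by (intro bern_aux) auto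
  then have "c powr \<alpha> * (\<alpha> * (t/c)) \<le> c powr \<alpha> * ((t/c) powr \<alpha> + \<alpha> - 1)"
    using assms by (intro mult_left_mono) auto
  moreover have "c powr \<alpha> * (\<alpha> * (t/c)) = \<alpha> * c powr (\<alpha> - 1) * t"
    using assms by (simp add: powr_diff field_simps)
  moreover have "c powr \<alpha> * ((t/c) powr \<alpha> + \<alpha> - 1) = t powr \<alpha> + (\<alpha> - 1) * c powr \<alpha>"
    using assms by (simp add: powr_divide field_simps)
  ultimately show ?thesis by simp
qed

lemma ln_aux:
  fixes t c :: real assumes "t \<ge> 0" "c > 0"
  shows "t * ln c + t - c \<le> t * ln t"
proof (cases "t = 0")
  case True then show ?thesis using assms by simp
next
  case False
  then have tp: "t > 0" using assms by simp
  have "ln (c/t) \<le> c/t - 1" using assms tp by (intro ln_le_minus_one) auto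
  then have "t * ln (c/t) \<le> t * (c/t - 1)" using tp by (intro mult_left_mono) auto
  moreover have "t * ln (c/t) = t * ln c - t * ln t" using tp assms by (simp add: ln_div algebra_simps)
  moreover have "t * (c/t - 1) = c - t" using tp by (simp add: field_simps)
  ultimately show ?thesis by simp
qed

lemma fs_AE:
  assumes S: "sets R = sets (count_space UNIV)" and Y: "emeasure R (UNIV - Y) = 0"
  shows "AE y in R. y \<in> Y"
proof (rule AE_I'[of "UNIV - Y"])
  have sp: "space R = UNIV" using sets_eq_imp_space_eq[OF S] by simp
  show "UNIV - Y \<in> null_sets R" using Y S by (auto simp: null_sets_def)
  show "{x \<in> space R. \<not> x \<in> Y} \<subseteq> UNIV - Y" by auto
qed

lemma fs_meas:
  assumes S: "sets R = sets (count_space UNIV)"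
  shows "u \<in> measurable R N' \<longleftrightarrow> u \<in> measurable (count_space UNIV) N'"
  using measurable_cong_sets[OF S refl, of N'] by simp

lemma nn_integral_fs:
  assumes S: "sets R = sets (count_space UNIV)" and Y: "finite Y" "emeasure R (UNIV - Y) = 0"
  shows "(\<integral>\<^sup>+y. u y \<partial>R) = (\<Sum>y\<in>Y. u y * emeasure R {y})"
proof -
  have ae: "AE y in R. y \<in> Y" using fs_AE[OF S Y(2)] .
  have "(\<integral>\<^sup>+y. u y \<partial>R) = (\<integral>\<^sup>+x. (\<Sum>y\<in>Y. u y * indicator {y} x) \<partial>R)"
  proof (rule nn_integral_cong_AE)
    show "AE x in R. u x = (\<Sum>y\<in>Y. u y * indicator {y} x)"
      using ae by eventually_elim (simp add: Y indicator_def)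
  qed
  also have "\<dots> = (\<Sum>y\<in>Y. (\<integral>\<^sup>+x. u y * indicator {y} x \<partial>R))"
    by (rule nn_integral_sum) (simp add: fs_meas[OF S])
  also have "\<dots> = (\<Sum>y\<in>Y. u y * emeasure R {y})"
    by (intro sum.cong refl nn_integral_cmult_indicator) (simp add: S)
  finally show ?thesis .
qed

lemma integral_fs:
  fixes u :: "'b \<Rightarrow> real"
  assumes S: "sets R = sets (count_space UNIV)" and Y: "finite Y" "emeasure R (UNIV - Y) = 0"
    and fin: "finite_measure R"
  shows "integrable R u" "integral\<^sup>L R u = (\<Sum>y\<in>Y. u y * measure R {y})"
proof -
  interpret finite_measure R by fact
  have ae: "AE y in R. y \<in> Y" using fs_AE[OF S Y(2)] .
  have ae2: "AE x in R. (\<Sum>y\<in>Y. u y * indicator {y} x) = u x"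
      using ae by eventually_elim (simp add: Y indicator_def)
  have int: "integrable R (\<lambda>x. (\<Sum>y\<in>Y. u y * indicator {y} x))"
    apply (rule Bochner_Integration.integrable_sum)
    apply (rule integrable_mult_right)
    apply (auto simp: integrable_indicator_iff S sets_eq_imp_space_eq[OF S] less_top[symmetric])
    done
  show "integrable R u" using integrable_cong_AE_imp[OF int _ ae2] by (simp add: fs_meas[OF S])
  have "integral\<^sup>L R u = integral\<^sup>L R (\<lambda>x. (\<Sum>y\<in>Y. u y * indicator {y} x))"
    using ae2 by (intro integral_cong_AE) (auto simp: fs_meas[OF S])
  also have "\<dots> = (\<Sum>y\<in>Y. u y * measure R {y})"
    by (subst Bochner_Integration.integral_sum) (auto simp: S sets_eq_imp_space_eq[OF S] integrable_indicator_iff less_top[symmetric])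
  finally show "integral\<^sup>L R u = (\<Sum>y\<in>Y. u y * measure R {y})" .
qed

lemma dp:
  fixes P Q :: "'a measure" and g :: "'a \<Rightarrow> 'b"
  assumes P: "prob_space P" and Q: "prob_space Q" and sPQ: "sets P = sets Q"
    and g: "g \<in> measurable Q (count_space UNIV)" and Y: "finite Y" "\<And>x. x \<in> space Q \<Longrightarrow> g x \<in> Y"
    and al: "\<alpha> \<ge> 1"
  shows "renyi_div \<alpha> (distr P (count_space UNIV) g) (distr Q (count_space UNIV) g) \<le> renyi_div \<alpha> P Q"
proof (cases "absolutely_continuous Q P")
  case False then show ?thesis by (simp add: renyi_div_def)
next
  case ac: True
  interpret P: prob_space P by fact
  interpret Q: prob_space Q by fact
  define N where "N = (count_space UNIV :: 'b measure)"
  define P' where "P' = distr P N g"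
  define Q' where "Q' = distr Q N g"
  have spPQ: "space P = space Q" using sets_eq_imp_space_eq[OF sPQ] .
  have gQ: "g \<in> measurable Q N" using g N_def by simp
  have gP: "g \<in> measurable P N" using gQ measurable_cong_sets[OF sPQ refl, of N] by simp
  interpret P': prob_space P' unfolding P'_def by (rule P.prob_space_distr[OF gP])
  interpret Q': prob_space Q' unfolding Q'_def by (rule Q.prob_space_distr[OF gQ])
  have sP': "sets P' = sets (count_space UNIV)" by (simp add: P'_def N_def)
  have sQ': "sets Q' = sets (count_space UNIV)" by (simp add: Q'_def N_def)
  have eP': "emeasure P' B = emeasure P (g -` B \<inter> space Q)" for B
    using emeasure_distr[OF gP, of B] spPQ by (simp add: P'_def N_def)
  have eQ': "emeasure Q' B = emeasure Q (g -` B \<inter> space Q)" for B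
    using emeasure_distr[OF gQ, of B] by (simp add: Q'_def N_def)
  have pre: "g -` B \<inter> space Q \<in> sets Q" for B
    using measurable_sets[OF gQ, of B] by (simp add: N_def)
  have ac': "absolutely_continuous Q' P'"
    unfolding absolutely_continuous_def
  proof
    fix B assume "B \<in> null_sets Q'"
    then have "g -` B \<inter> space Q \<in> null_sets Q" using eQ' pre by (auto simp: null_sets_def)
    then have "g -` B \<inter> space Q \<in> null_sets P" using ac unfolding absolutely_continuous_def by auto
    then show "B \<in> null_sets P'" using eP' sP' by (auto simp: null_sets_def)
  qed
  have emp: "g -` (UNIV - Y) \<inter> space Q = {}" using Y(2) by auto
  have suppP: "emeasure P' (UNIV - Y) = 0" using eP'[of "UNIV - Y"] emp by simp
  have suppQ: "emeasure Q' (UNIV - Y) = 0" using eQ'[of "UNIV - Y"] emp by simp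
  define p where "p y = measure P' {y}" for y
  define q where "q y = measure Q' {y}" for y
  have p0: "p y \<ge> 0" "q y \<ge> 0" for y by (auto simp: p_def q_def)
  have pq0: "p y = 0" if "q y = 0" for y
  proof -
    have "{y} \<in> null_sets Q'" using that sQ' by (simp add: q_def Q'.emeasure_eq_measure null_sets_def)
    then have "{y} \<in> null_sets P'" using ac' unfolding absolutely_continuous_def by auto
    then show ?thesis by (simp add: p_def P'.emeasure_eq_measure null_sets_def)
  qed
  have RN': "enn2real (RN_deriv Q' P' y) = p y / q y" if qp: "q y > 0" for y
  proof -
    have "emeasure P' {y} = RN_deriv Q' P' y * emeasure Q' {y}"
      by (rule Q'.RN_deriv_singleton[OF ac']) (auto simp: sP' sQ')
    then have "ennreal (p y) = RN_deriv Q' P' y * ennreal (q y)"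
      by (simp add: p_def q_def P'.emeasure_eq_measure Q'.emeasure_eq_measure)
    then have "enn2real (ennreal (p y)) = enn2real (RN_deriv Q' P' y * ennreal (q y))" by simp
    then have "p y = enn2real (RN_deriv Q' P' y) * q y"
      using p0[of y] by (simp add: enn2real_mult)
    then show ?thesis using qp by (simp add: field_simps)
  qed
  define F where "F = RN_deriv Q P"
  define f where "f x = enn2real (F x)" for x
  have Fm[measurable]: "F \<in> borel_measurable Q" unfolding F_def by simp
  have fm[measurable]: "f \<in> borel_measurable Q" unfolding f_def by simp
  have f0: "f x \<ge> 0" for x by (simp add: f_def)
  have dens: "density Q F = P" unfolding F_def by (rule Q.density_RN_deriv[OF ac sPQ])
  have Ffin: "AE x in Q. F x \<noteq> \<infinity>"
    unfolding F_def by (rule Q.RN_deriv_finite[OF P.sigma_finite_measure_axioms ac sPQ])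
  have densf: "density Q (\<lambda>x. ennreal (f x)) = P"
  proof -
    have "density Q (\<lambda>x. ennreal (f x)) = density Q F"
      by (rule density_cong) (use Ffin in \<open>auto simp: f_def less_top[symmetric] elim!: AE_mp\<close>)
    then show ?thesis using dens by simp
  qed
  define A where "A y = g -` {y} \<inter> space Q" for y
  have Am[measurable]: "A y \<in> sets Q" for y unfolding A_def by (rule pre)
  have intP: "integral\<^sup>L P h = integral\<^sup>L Q (\<lambda>x. f x * h x)" if [measurable]: "h \<in> borel_measurable Q" for h :: "'a \<Rightarrow> real"
    using integral_density[of h Q f] densf f0 by simp
  have intbP: "integrable P h \<longleftrightarrow> integrable Q (\<lambda>x. f x * h x)" if [measurable]: "h \<in> borel_measurable Q" for h :: "'a \<Rightarrow> real"
    using integrable_density[of h Q f] densf f0 by simp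
  have intf: "integrable Q f" using intbP[of "\<lambda>_. 1"] by simp
  have pA: "p y = integral\<^sup>L Q (\<lambda>x. f x * indicator (A y) x)" for y
  proof -
    have "p y = measure P (A y)" unfolding p_def A_def
      using eP'[of "{y}"] by (simp add: P'.emeasure_eq_measure P.emeasure_eq_measure)
    also have "\<dots> = integral\<^sup>L P (indicator (A y))" using Am[of y] sPQ spPQ
      by (simp add: Int_absorb2 sets.sets_into_space)
    also have "\<dots> = integral\<^sup>L Q (\<lambda>x. f x * indicator (A y) x)" by (rule intP) simp
    finally show ?thesis .
  qed
  have qA: "q y = integral\<^sup>L Q (indicator (A y))" for y
    unfolding q_def A_def using eQ'[of "{y}"] Am[of y]
    by (simp add: Q'.emeasure_eq_measure Q.emeasure_eq_measure Int_absorb2 sets.sets_into_space)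
  have part1: "(\<Sum>y\<in>Y. indicator (A y) x) = (1::real)" if "x \<in> space Q" for x
  proof -
    have "(\<Sum>y\<in>Y. indicator (A y) x) = (\<Sum>y\<in>Y. if y = g x then 1 else (0::real))"
      by (intro sum.cong refl) (auto simp: A_def that indicator_def)
    also have "\<dots> = 1" using Y that by simp
    finally show ?thesis .
  qed
  have part: "integral\<^sup>L Q h = (\<Sum>y\<in>Y. integral\<^sup>L Q (\<lambda>x. h x * indicator (A y) x))"
    if "integrable Q h" for h :: "'a \<Rightarrow> real"
  proof -
    have "integral\<^sup>L Q h = integral\<^sup>L Q (\<lambda>x. \<Sum>y\<in>Y. h x * indicator (A y) x)"
      by (intro Bochner_Integration.integral_cong refl) (simp add: part1 flip: sum_distrib_left)
    also have "\<dots> = (\<Sum>y\<in>Y. integral\<^sup>L Q (\<lambda>x. h x * indicator (A y) x))"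
      by (rule Bochner_Integration.integral_sum) (auto intro: integrable_real_mult_indicator that)
    finally show ?thesis .
  qed
  have Psum: "(\<Sum>y\<in>Y. p y) = 1"
  proof -
    have "emeasure P' Y = emeasure P (space Q)" using eP'[of Y] Y(2)
      by (metis (no_types, lifting) Int_absorb1 subsetI vimageI2 vimage_eq)
    then have "measure P' Y = 1" using spPQ P.prob_space by (simp add: P'.emeasure_eq_measure P.emeasure_eq_measure)
    moreover have "measure P' Y = (\<Sum>y\<in>Y. measure P' {y})"
      by (rule measure_eq_sum_singleton) (auto simp: Y sP')
    ultimately show ?thesis by (simp add: p_def)
  qed
  have ind0: "AE x in Q. f x * indicator (A y) x = 0" if "p y = 0" for y
  proof -
    have "integral\<^sup>L Q (\<lambda>x. f x * indicator (A y) x) = 0" using that pA by simp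
    then show ?thesis
      using integral_nonneg_eq_0_iff_AE[of Q "\<lambda>x. f x * indicator (A y) x"] intf f0
      by (simp add: integrable_real_mult_indicator)
  qed
  show ?thesis
  proof (cases "\<alpha> = 1")
    case True
    show ?thesis
    proof (cases "integrable P (\<lambda>x. ln (f x))")
      case False
      then show ?thesis using ac sPQ True by (simp add: renyi_div_def f_def F_def Let_def)
    next
      case intln: True
      have intfl: "integrable Q (\<lambda>x. f x * ln (f x))" using intln intbP[of "\<lambda>x. ln (f x)"] by simp
      have R: "renyi_div \<alpha> P Q = ereal (integral\<^sup>L Q (\<lambda>x. f x * ln (f x)))"
        using ac sPQ True intln intP[of "\<lambda>x. ln (f x)"] by (simp add: renyi_div_def f_def F_def Let_def)
      have iL: "integrable P' (\<lambda>y. ln (enn2real (RN_deriv Q' P' y)))"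
        and vL: "integral\<^sup>L P' (\<lambda>y. ln (enn2real (RN_deriv Q' P' y))) = (\<Sum>y\<in>Y. ln (enn2real (RN_deriv Q' P' y)) * p y)"
        using integral_fs[OF sP' Y(1) suppP P'.finite_measure_axioms] by (auto simp: p_def)
      have L: "renyi_div \<alpha> P' Q' = ereal (\<Sum>y\<in>Y. ln (enn2real (RN_deriv Q' P' y)) * p y)"
        using ac' sP' sQ' True iL vL by (simp add: renyi_div_def Let_def)
      have "(\<Sum>y\<in>Y. ln (enn2real (RN_deriv Q' P' y)) * p y)
            \<le> (\<Sum>y\<in>Y. integral\<^sup>L Q (\<lambda>x. f x * ln (f x) * indicator (A y) x))"
      proof (rule sum_mono)
        fix y assume "y \<in> Y"
        show "ln (enn2real (RN_deriv Q' P' y)) * p y \<le> integral\<^sup>L Q (\<lambda>x. f x * ln (f x) * indicator (A y) x)"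
        proof (cases "p y = 0")
          case True
          have "integral\<^sup>L Q (\<lambda>x. f x * ln (f x) * indicator (A y) x) = integral\<^sup>L Q (\<lambda>x. 0)"
            by (rule integral_cong_AE) (use ind0[OF True] in \<open>auto elim!: AE_mp simp: indicator_def split: if_splits\<close>)
          then show ?thesis using True by simp
        next
          case False
          then have pp: "p y > 0" using p0[of y] by simp
          then have qp: "q y > 0" using pq0[of y] p0[of y] by force
          define c where "c = p y / q y"
          have cp: "c > 0" using pp qp by (simp add: c_def)
          have "integral\<^sup>L Q (\<lambda>x. (ln c + 1) * (f x * indicator (A y) x) - c * indicator (A y) x)
                \<le> integral\<^sup>L Q (\<lambda>x. f x * ln (f x) * indicator (A y) x)"
          proof (rule integral_mono)
            show "integrable Q (\<lambda>x. (ln c + 1) * (f x * indicator (A y) x) - c * indicator (A y) x)"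
              using intf by (intro Bochner_Integration.integrable_diff integrable_mult_right integrable_real_mult_indicator)
                 (auto simp: integrable_indicator_iff Q.emeasure_eq_measure)
            show "integrable Q (\<lambda>x. f x * ln (f x) * indicator (A y) x)"
              using intfl by (intro integrable_real_mult_indicator) auto
            fix x show "(ln c + 1) * (f x * indicator (A y) x) - c * indicator (A y) x \<le> f x * ln (f x) * indicator (A y) x"
              using ln_aux[OF f0[of x] cp] by (auto simp: indicator_def algebra_simps)
          qed
          moreover have "integral\<^sup>L Q (\<lambda>x. (ln c + 1) * (f x * indicator (A y) x) - c * indicator (A y) x)
                = (ln c + 1) * p y - c * q y"
            using intf
            by (subst Bochner_Integration.integral_diff)
               (auto simp: pA qA integrable_indicator_iff Q.emeasure_eq_measure intro!: integrable_real_mult_indicator)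
          moreover have "(ln c + 1) * p y - c * q y = ln c * p y" using qp by (simp add: c_def field_simps)
          ultimately show ?thesis using RN'[OF qp] by (simp add: c_def mult.commute)
        qed
      qed
      also have "\<dots> = integral\<^sup>L Q (\<lambda>x. f x * ln (f x))" using part[OF intfl] by simp
      finally show ?thesis using L R by (simp add: P'_def Q'_def N_def)
    qed
  next
    case False
    then have a1: "\<alpha> > 1" using al by simp
    define I where "I = (\<integral>\<^sup>+ x. ennreal (f x powr \<alpha>) \<partial>Q)"
    show ?thesis
    proof (cases "I = \<infinity>")
      case True
      then show ?thesis using ac sPQ False by (simp add: renyi_div_def f_def F_def Let_def I_def)
    next
      case Ifin: False
      have R: "renyi_div \<alpha> P Q = ereal (ln (enn2real I) / (\<alpha> - 1))"
        using ac sPQ False Ifin by (simp add: renyi_div_def f_def F_def Let_def I_def)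
      have intpw: "integrable Q (\<lambda>x. f x powr \<alpha>)"
        using Ifin by (intro integrableI_nonneg) (auto simp: I_def less_top)
      have Ieq: "enn2real I = integral\<^sup>L Q (\<lambda>x. f x powr \<alpha>)"
        unfolding I_def by (subst nn_integral_eq_integral[OF intpw]) auto
      define S where "S = (\<Sum>y\<in>Y. (p y / q y) powr \<alpha> * q y)"
      have I': "(\<integral>\<^sup>+ y. ennreal (enn2real (RN_deriv Q' P' y) powr \<alpha>) \<partial>Q') = ennreal S"
      proof -
        have "(\<integral>\<^sup>+ y. ennreal (enn2real (RN_deriv Q' P' y) powr \<alpha>) \<partial>Q')
            = (\<Sum>y\<in>Y. ennreal (enn2real (RN_deriv Q' P' y) powr \<alpha>) * emeasure Q' {y})"
          by (rule nn_integral_fs[OF sQ' Y(1) suppQ])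
        also have "\<dots> = (\<Sum>y\<in>Y. ennreal ((p y / q y) powr \<alpha> * q y))"
        proof (intro sum.cong refl)
          fix y assume "y \<in> Y"
          show "ennreal (enn2real (RN_deriv Q' P' y) powr \<alpha>) * emeasure Q' {y} = ennreal ((p y / q y) powr \<alpha> * q y)"
          proof (cases "q y = 0")
            case True then show ?thesis by (simp add: Q'.emeasure_eq_measure q_def)
          next
            case False
            then have "q y > 0" using p0[of y] by simp
            then show ?thesis using RN'[of y] p0[of y]
              by (simp add: Q'.emeasure_eq_measure q_def ennreal_mult'')
          qed
        qed
        also have "\<dots> = ennreal S" unfolding S_def using p0
          by (intro sum_ennreal) auto
        finally show ?thesis .
      qed
      have S0: "S \<ge> 0" unfolding S_def using p0 by (intro sum_nonneg) auto
      have L: "renyi_div \<alpha> P' Q' = ereal (ln S / (\<alpha> - 1))"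
        using ac' sP' sQ' False I' S0 by (simp add: renyi_div_def Let_def)
      have Spos: "S > 0"
      proof -
        obtain y where y: "y \<in> Y" "p y > 0"
        proof (rule ccontr)
          assume "\<not> thesis"
          then have "\<forall>y\<in>Y. p y = 0" using that p0 by (metis order_le_less)
          then show False using Psum by simp
        qed
        then have qp: "q y > 0" using pq0[of y] p0[of y] by force
        show ?thesis unfolding S_def
          using y qp p0 by (intro sum_pos2[OF Y(1) y(1)]) auto
      qed
      have "S \<le> (\<Sum>y\<in>Y. integral\<^sup>L Q (\<lambda>x. f x powr \<alpha> * indicator (A y) x))"
        unfolding S_def
      proof (rule sum_mono)
        fix y assume "y \<in> Y"
        have nn: "0 \<le> integral\<^sup>L Q (\<lambda>x. f x powr \<alpha> * indicator (A y) x)"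
          by (intro integral_nonneg_AE) auto
        show "(p y / q y) powr \<alpha> * q y \<le> integral\<^sup>L Q (\<lambda>x. f x powr \<alpha> * indicator (A y) x)"
        proof (cases "p y = 0")
          case True then show ?thesis using nn by simp
        next
          case False
          then have pp: "p y > 0" using p0[of y] by simp
          then have qp: "q y > 0" using pq0[of y] p0[of y] by force
          define c where "c = p y / q y"
          have cp: "c > 0" using pp qp by (simp add: c_def)
          have "integral\<^sup>L Q (\<lambda>x. (\<alpha> * c powr (\<alpha> - 1)) * (f x * indicator (A y) x) - ((\<alpha> - 1) * c powr \<alpha>) * indicator (A y) x)
                \<le> integral\<^sup>L Q (\<lambda>x. f x powr \<alpha> * indicator (A y) x)"
          proof (rule integral_mono)
            show "integrable Q (\<lambda>x. (\<alpha> * c powr (\<alpha> - 1)) * (f x * indicator (A y) x) - ((\<alpha> - 1) * c powr \<alpha>) * indicator (A y) x)"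
              using intf by (intro Bochner_Integration.integrable_diff integrable_mult_right integrable_real_mult_indicator)
                 (auto simp: integrable_indicator_iff Q.emeasure_eq_measure)
            show "integrable Q (\<lambda>x. f x powr \<alpha> * indicator (A y) x)"
              using intpw by (intro integrable_real_mult_indicator) auto
            fix x show "(\<alpha> * c powr (\<alpha> - 1)) * (f x * indicator (A y) x) - ((\<alpha> - 1) * c powr \<alpha>) * indicator (A y) x \<le> f x powr \<alpha> * indicator (A y) x"
              using bern[OF f0[of x] cp al] by (auto simp: indicator_def algebra_simps)
          qed
          moreover have "integral\<^sup>L Q (\<lambda>x. (\<alpha> * c powr (\<alpha> - 1)) * (f x * indicator (A y) x) - ((\<alpha> - 1) * c powr \<alpha>) * indicator (A y) x)
                = (\<alpha> * c powr (\<alpha> - 1)) * p y - ((\<alpha> - 1) * c powr \<alpha>) * q y"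
            using intf
            by (subst Bochner_Integration.integral_diff)
               (auto simp: pA qA integrable_indicator_iff Q.emeasure_eq_measure intro!: integrable_real_mult_indicator)
          moreover have "(\<alpha> * c powr (\<alpha> - 1)) * p y - ((\<alpha> - 1) * c powr \<alpha>) * q y = c powr \<alpha> * q y"
          proof -
            have "p y = c * q y" using qp by (simp add: c_def)
            moreover have "c powr (\<alpha> - 1) * c = c powr \<alpha>" using cp by (simp add: powr_diff)
            ultimately show ?thesis by (simp add: algebra_simps)
          qed
          ultimately show ?thesis by (simp add: c_def)
        qed
      qed
      also have "\<dots> = enn2real I" using part[OF intpw] Ieq by simp
      finally have "ln S \<le> ln (enn2real I)" using Spos by simp
      then have "ln S / (\<alpha> - 1) \<le> ln (enn2real I) / (\<alpha> - 1)" using a1 by (simp add: divide_right_mono)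
      then show ?thesis using L R by (simp add: P'_def Q'_def N_def)
    qed
  qed
qed

lemma ranked_props:
  shows "length (ranked m D) = m" "distinct (ranked m D)" "set (ranked m D) = {..<m}"
    and "\<And>i j. i \<le> j \<Longrightarrow> j < m \<Longrightarrow> hcount D (ranked m D ! j) \<le> hcount D (ranked m D ! i)"
proof -
  show "length (ranked m D) = m" "distinct (ranked m D)" "set (ranked m D) = {..<m}"
    by (auto simp: ranked_def)
  fix i j :: nat assume ij: "i \<le> j" "j < m"
  have s: "sorted (map (\<lambda>j. - int (hcount D j)) (ranked m D))"
    unfolding ranked_def by (rule sorted_sort_key)
  have "(map (\<lambda>j. - int (hcount D j)) (ranked m D)) ! i \<le> (map (\<lambda>j. - int (hcount D j)) (ranked m D)) ! j"
    using sorted_nth_mono[OF s ij(1)] ij by (simp add: ranked_def)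
  then show "hcount D (ranked m D ! j) \<le> hcount D (ranked m D ! i)"
    using ij by (simp add: ranked_def)
qed

lemma in_take_idx:
  assumes "x \<in> set (take k xs)" shows "\<exists>a<k. a < length xs \<and> xs ! a = x"
  using assms by (auto simp: in_set_conv_nth)

lemma notin_take_idx:
  assumes "distinct xs" "z \<in> set xs" "z \<notin> set (take k xs)"
  shows "\<exists>b. k \<le> b \<and> b < length xs \<and> xs ! b = z"
proof -
  obtain b where b: "b < length xs" "xs ! b = z" using assms(2) by (auto simp: in_set_conv_nth)
  have "\<not> b < k"
  proof
    assume "b < k"
    then have "z \<in> set (take k xs)" using b by (auto simp: in_set_conv_nth intro!: exI[of _ b])
    then show False using assms(3) by simp
  qed
  then show ?thesis using b by (intro exI[of _ b]) auto
qed

lemma top_ge: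
  assumes "x \<in> topk m k D" "z \<in> {..<m} - topk m k D"
  shows "hcount D z \<le> hcount D x"
proof -
  obtain a where a: "a < k" "a < m" "ranked m D ! a = x"
    using in_take_idx[of x k "ranked m D"] assms(1) ranked_props(1) by (auto simp: topk_def)
  obtain b where b: "k \<le> b" "b < m" "ranked m D ! b = z"
    using notin_take_idx[of "ranked m D" z k] assms(2) ranked_props(1-3) by (auto simp: topk_def)
  show ?thesis using ranked_props(4)[of a b m D] a b by simp
qed

lemma topk_hi:
  assumes "x \<in> topk m k D" "1 \<le> k" "k \<le> m"
  shows "hsorted m D k \<le> hcount D x"
proof -
  obtain a where a: "a < k" "a < m" "ranked m D ! a = x"
    using in_take_idx[of x k "ranked m D"] assms(1) ranked_props(1) by (auto simp: topk_def)
  have "k - 1 < m" "a \<le> k - 1" using a assms by auto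
  then show ?thesis using ranked_props(4)[of a "k - 1" m D] a by (simp add: hsorted_def)
qed

lemma topk_lo:
  assumes "z \<in> {..<m} - topk m k D" "k < m"
  shows "hcount D z \<le> hsorted m D (k + 1)"
proof -
  obtain b where b: "k \<le> b" "b < m" "ranked m D ! b = z"
    using notin_take_idx[of "ranked m D" z k] assms(1) ranked_props(1-3) by (auto simp: topk_def)
  show ?thesis using ranked_props(4)[of k b m D] b assms(2) by (simp add: hsorted_def)
qed

lemma card_topk: "k \<le> m \<Longrightarrow> card (topk m k D) = k"
  unfolding topk_def using ranked_props(1,2)[of m D]
  by (simp add: distinct_card)

lemma topk_sub: "topk m k D \<subseteq> {..<m}"
  unfolding topk_def using set_take_subset[of k "ranked m D"] ranked_props(3)[of m D] by simp

lemma topk_stable: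
  assumes k: "1 \<le> k" "k < m"
    and mono: "(\<forall>j. hcount D j \<le> hcount D' j \<and> hcount D' j \<le> hcount D j + 1) \<or>
               (\<forall>j. hcount D' j \<le> hcount D j \<and> hcount D j \<le> hcount D' j + 1)"
    and gp: "gap m k D \<ge> 2"
  shows "topk m k D' = topk m k D"
proof (rule ccontr)
  assume ne: "topk m k D' \<noteq> topk m k D"
  let ?S = "topk m k D" and ?S' = "topk m k D'"
  have fin: "finite ?S" "finite ?S'" by (auto simp: topk_def)
  have cS: "card ?S = k" "card ?S' = k" using k by (auto intro: card_topk)
  obtain j where j: "j \<in> ?S'" "j \<notin> ?S"
  proof -
    have "\<not> ?S' \<subseteq> ?S"
    proof
      assume "?S' \<subseteq> ?S"
      then have "?S' = ?S" using card_subset_eq[OF fin(1)] cS by simp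
      then show False using ne by simp
    qed
    then show ?thesis using that by blast
  qed
  obtain i where i: "i \<in> ?S" "i \<notin> ?S'"
  proof -
    have "\<not> ?S \<subseteq> ?S'"
    proof
      assume "?S \<subseteq> ?S'"
      then have "?S = ?S'" using card_subset_eq[OF fin(2)] cS by simp
      then show False using ne by simp
    qed
    then show ?thesis using that by blast
  qed
  have jm: "j < m" using j topk_sub by blast
  have im: "i < m" using i topk_sub by blast
  have h1: "hcount D' i \<le> hcount D' j" using top_ge[of j m k D' i] j i im by auto
  have h2: "hcount D j \<le> hsorted m D (k+1)" using topk_lo[of j m k D] j jm k by auto
  have h3: "hsorted m D k \<le> hcount D i" using topk_hi[of i m k D] i k by auto
  have h4: "hsorted m D (k+1) + 2 \<le> hsorted m D k" using gp unfolding gap_def by linarith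
  from mono show False
  proof
    assume a: "\<forall>j. hcount D j \<le> hcount D' j \<and> hcount D' j \<le> hcount D j + 1"
    then have "hcount D' j \<le> hcount D j + 1" "hcount D i \<le> hcount D' i" by auto
    then show False using h1 h2 h3 h4 by linarith
  next
    assume a: "\<forall>j. hcount D' j \<le> hcount D j \<and> hcount D j \<le> hcount D' j + 1"
    then have "hcount D' j \<le> hcount D j" "hcount D i \<le> hcount D' i + 1" by auto
    then show False using h1 h2 h3 h4 by linarith
  qed
qed

lemma hc_add: "hcount (D + {#u#}) j = hcount D j + (if j \<in> u then 1 else 0)"
  by (simp add: hcount_def)

lemma renyi_self:
  assumes "prob_space R"
  shows "renyi_div \<alpha> R R = 0"
proof -
  interpret R: prob_space R by fact
  have ae: "AE x in R. 1 = RN_deriv R R x"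
    by (rule RN_deriv_unique_sigma_finite) (auto simp: density_1 R.sigma_finite_measure_axioms)
  have ac: "absolutely_continuous R R" by (simp add: absolutely_continuous_def)
  have ae2: "AE x in R. ln (enn2real (RN_deriv R R x)) = 0"
    using ae by eventually_elim (metis enn2real_1 ln_one)
  have ae3: "AE x in R. 0 = ln (enn2real (RN_deriv R R x))"
    using ae2 by eventually_elim simp
  have int: "integrable R (\<lambda>x. ln (enn2real (RN_deriv R R x)))"
    by (rule integrable_cong_AE_imp[of R "\<lambda>_. 0::real", OF _ _ ae3]) auto
  have i0: "integral\<^sup>L R (\<lambda>x. ln (enn2real (RN_deriv R R x))) = 0"
    using integral_cong_AE[of "\<lambda>x. ln (enn2real (RN_deriv R R x))" R "\<lambda>_. 0::real"] ae2 by simp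
  have n1: "(\<integral>\<^sup>+ x. ennreal (enn2real (RN_deriv R R x) powr \<alpha>) \<partial>R) = 1"
  proof -
    have "(\<integral>\<^sup>+ x. ennreal (enn2real (RN_deriv R R x) powr \<alpha>) \<partial>R) = (\<integral>\<^sup>+ x. 1 \<partial>R)"
      by (rule nn_integral_cong_AE) (use ae in \<open>eventually_elim, metis enn2real_1 ennreal_1 powr_one_eq_one\<close>)
    then show ?thesis by (simp add: R.emeasure_space_1)
  qed
  show ?thesis using ac int i0 n1 by (simp add: renyi_div_def Let_def)
qed

lemma renyi_null:
  "renyi_div \<alpha> (null_measure (count_space UNIV)) (null_measure (count_space UNIV)) = 0"
proof -
  have m: "h \<in> borel_measurable (null_measure (count_space UNIV))" for h :: "'a \<Rightarrow> real"
    using measurable_cong_sets[of "null_measure (count_space UNIV)" "count_space UNIV" borel borel] by simp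
  show ?thesis using m by (simp add: renyi_div_def Let_def absolutely_continuous_def)
qed

lemma unif_space: "prob_space M \<Longrightarrow> uniform_measure M (space M) = M"
proof -
  assume "prob_space M"
  then interpret prob_space M .
  have "uniform_measure M (space M) = density M (\<lambda>_. 1)"
    unfolding uniform_measure_def
    by (rule density_cong) (auto simp: emeasure_space_1 indicator_def)
  then show ?thesis by (simp add: density_1)
qed

lemma const_distr:
  assumes "prob_space U" "prob_space V"
  shows "distr U (count_space UNIV) (\<lambda>_. c) = distr V (count_space UNIV) (\<lambda>_. c)"
proof (rule measure_eqI)
  interpret U: prob_space U by fact
  interpret V: prob_space V by fact
  fix A assume "A \<in> sets (distr U (count_space UNIV) (\<lambda>_. c))"
  show "emeasure (distr U (count_space UNIV) (\<lambda>_. c)) A = emeasure (distr V (count_space UNIV) (\<lambda>_. c)) A"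
    by (simp add: emeasure_distr U.emeasure_space_1 V.emeasure_space_1)
qed simp

lemma gT_meas: "(\<lambda>x::real. if x > 1 then Some T else None) \<in> measurable borel (count_space UNIV)"
  by (rule measurable_If) auto

lemma gap_small:
  assumes "\<not> gap m k D \<ge> 2" shows "gap m k D \<le> 1"
proof -
  have "real (hsorted m D k) < real (hsorted m D (k+1) + 2)" using assms unfolding gap_def by simp
  then have "hsorted m D k < hsorted m D (k+1) + 2" by (simp only: of_nat_less_iff)
  then have "hsorted m D k \<le> hsorted m D (k+1) + 1" by simp
  then have "real (hsorted m D k) \<le> real (hsorted m D (k+1) + 1)" by (simp only: of_nat_le_iff)
  then show ?thesis unfolding gap_def by simp
qed

theorem mainTheorem7:
  fixes M :: "'w measure"
    and qhat :: "nat set multiset \<Rightarrow> 'w \<Rightarrow> real"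
    and m k :: nat and \<delta>t :: real and \<epsilon>gap :: "real \<Rightarrow> real"
  assumes "prob_space M"
    and "1 \<le> k" and "k \<le> m - 1"
    and meas: "\<And>D. qhat D \<in> borel_measurable M"
    and rdp_gap: "\<And>\<alpha>. \<alpha> \<ge> 1 \<Longrightarrow> rdp M borel (neighbors m) qhat \<alpha> (\<epsilon>gap \<alpha>)"
    and tail: "\<And>D. valid_ds m D \<Longrightarrow>
                 measure M {\<omega> \<in> space M. qhat D \<omega> \<ge> gap m k D} \<le> \<delta>t"
  shows "approx_rdp M (count_space UNIV) (neighbors m)
           (\<lambda>D \<omega>. if qhat D \<omega> > 1 then Some (topk m k D) else None) \<delta>t \<epsilon>gap"
proof -
  interpret M: prob_space M by fact
  define N where "N = (count_space UNIV :: nat set option measure)"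
  define gT where "gT (T::nat set) x = (if (x::real) > 1 then Some T else None)" for T x
  define Pq where "Pq D = distr M borel (qhat D)" for D
  have k1: "1 \<le> k" "k < m" using assms(2,3) by auto
  have gTm: "gT T \<in> measurable borel N" for T unfolding gT_def N_def by (rule gT_meas)
  have Pqp: "prob_space (Pq D)" for D unfolding Pq_def by (rule M.prob_space_distr[OF meas])
  have distrPq: "distr M N (\<lambda>\<omega>. gT T (qhat D \<omega>)) = distr (Pq D) N (gT T)" for T D
    unfolding Pq_def using distr_distr[OF gTm meas] by (simp add: comp_def)
  show ?thesis unfolding approx_rdp_def
  proof (intro allI impI)
    fix D D' assume nb: "neighbors m D D'"
    have vD: "valid_ds m D" and vD': "valid_ds m D'" using nb by (auto simp: neighbors_def)
    have dt0: "\<delta>t \<ge> 0" using tail[OF vD] measure_nonneg[of M] by (meson order_trans)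
    have rdpD: "renyi_div \<alpha> (Pq D) (Pq D') \<le> ereal (\<epsilon>gap \<alpha>)" if "\<alpha> \<ge> 1" for \<alpha>
      using rdp_gap[OF that] nb unfolding rdp_def Pq_def by blast
    have dpD: "renyi_div \<alpha> (distr M N (\<lambda>\<omega>. gT T (qhat D \<omega>))) (distr M N (\<lambda>\<omega>. gT T (qhat D' \<omega>))) \<le> ereal (\<epsilon>gap \<alpha>)"
      if a: "\<alpha> \<ge> 1" for \<alpha> T
    proof -
      have "renyi_div \<alpha> (distr (Pq D) N (gT T)) (distr (Pq D') N (gT T)) \<le> renyi_div \<alpha> (Pq D) (Pq D')"
        unfolding N_def
        by (rule dp[OF Pqp Pqp _ _ _ _ a, where Y="{Some T, None}"])
           (use gTm in \<open>auto simp: Pq_def N_def gT_def\<close>)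
      then show ?thesis using rdpD[OF a] distrPq by simp
    qed
    have R0: "renyi_div \<alpha> (distr M N (\<lambda>_. None)) (distr M N (\<lambda>_. None)) = 0" for \<alpha>
      by (rule renyi_self, rule M.prob_space_distr) (simp add: N_def)
    have nonneg: "0 \<le> \<epsilon>gap \<alpha>" if a: "\<alpha> \<ge> 1" for \<alpha>
    proof -
      have "renyi_div \<alpha> (distr (Pq D) N (\<lambda>_. None)) (distr (Pq D') N (\<lambda>_. None)) \<le> renyi_div \<alpha> (Pq D) (Pq D')"
        unfolding N_def
        by (rule dp[OF Pqp Pqp _ _ _ _ a, where Y="{None}"]) (auto simp: Pq_def)
      moreover have "distr (Pq D) N (\<lambda>_. None) = distr M N (\<lambda>_. None)"
        "distr (Pq D') N (\<lambda>_. None) = distr M N (\<lambda>_. None)"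
        unfolding N_def by (intro const_distr Pqp M.prob_space_axioms)+
      ultimately have "0 \<le> renyi_div \<alpha> (Pq D) (Pq D')" using R0 by simp
      then have "ereal 0 \<le> ereal (\<epsilon>gap \<alpha>)" using rdpD[OF a] by (metis zero_ereal_def order_trans)
      then show ?thesis by simp
    qed
    have mono1: "(\<forall>j. hcount D j \<le> hcount D' j \<and> hcount D' j \<le> hcount D j + 1) \<or>
               (\<forall>j. hcount D' j \<le> hcount D j \<and> hcount D j \<le> hcount D' j + 1)"
    proof -
      have "(\<exists>u. D' = D + {#u#}) \<or> (\<exists>u. D = D' + {#u#})" using nb unfolding neighbors_def by blast
      then show ?thesis
      proof
        assume "\<exists>u. D' = D + {#u#}"
        then obtain u where u: "D' = D + {#u#}" by blast
        have "\<forall>j. hcount D j \<le> hcount D' j \<and> hcount D' j \<le> hcount D j + 1"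
          unfolding u hc_add by auto
        then show ?thesis by blast
      next
        assume "\<exists>u. D = D' + {#u#}"
        then obtain u where u: "D = D' + {#u#}" by blast
        have "\<forall>j. hcount D' j \<le> hcount D j \<and> hcount D j \<le> hcount D' j + 1"
          unfolding u hc_add by auto
        then show ?thesis by blast
      qed
    qed
    have mono2: "(\<forall>j. hcount D' j \<le> hcount D j \<and> hcount D j \<le> hcount D' j + 1) \<or>
               (\<forall>j. hcount D j \<le> hcount D' j \<and> hcount D' j \<le> hcount D j + 1)"
      using mono1 by blast
    let ?mech = "\<lambda>D \<omega>. if qhat D \<omega> > 1 then Some (topk m k D) else None"
    have mechm: "?mech D0 \<in> measurable M (count_space UNIV)" for D0
      using measurable_comp[OF meas gTm[of "topk m k D0"]] unfolding gT_def N_def comp_def by simp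
    show "\<exists>E E'. E \<in> sets M \<and> E' \<in> sets M \<and> 1 - \<delta>t \<le> measure M E \<and> 1 - \<delta>t \<le> measure M E' \<and>
          (\<forall>\<alpha>\<ge>1. renyi_div \<alpha> (distr (uniform_measure M E) (count_space UNIV) (?mech D))
                     (distr (uniform_measure M E') (count_space UNIV) (?mech D')) \<le> ereal (\<epsilon>gap \<alpha>))"
    proof (cases "topk m k D = topk m k D'")
      case eq: True
      have m1: "?mech D = (\<lambda>\<omega>. gT (topk m k D) (qhat D \<omega>))" "?mech D' = (\<lambda>\<omega>. gT (topk m k D) (qhat D' \<omega>))"
        using eq by (auto simp: gT_def)
      show ?thesis
        using dpD dt0 unfolding m1 N_def
        by (intro exI[of _ "space M"]) (simp add: unif_space[OF assms(1)] M.prob_space)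
    next
      case ne: False
      have "\<not> gap m k D \<ge> 2"
      proof
        assume "gap m k D \<ge> 2"
        then have "topk m k D' = topk m k D" by (rule topk_stable[OF k1 mono1])
        then show False using ne by simp
      qed
      moreover have "\<not> gap m k D' \<ge> 2"
      proof
        assume "gap m k D' \<ge> 2"
        then have "topk m k D = topk m k D'" by (rule topk_stable[OF k1 mono2])
        then show False using ne by simp
      qed
      ultimately have gs: "gap m k D \<le> 1" "gap m k D' \<le> 1" by (auto intro: gap_small)
      show ?thesis
      proof (cases "\<delta>t \<ge> 1")
        case True
        have nul: "distr (uniform_measure M {}) (count_space UNIV) h = null_measure (count_space UNIV)"
          if hm: "h \<in> measurable M (count_space UNIV)" for h :: "'w \<Rightarrow> nat set option"
        proof (rule measure_eqI)
          have hm': "h \<in> measurable (uniform_measure M {}) (count_space UNIV)"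
            using hm by (simp add: measurable_cong_sets)
          fix B assume "B \<in> sets (distr (uniform_measure M {}) (count_space UNIV) h)"
          then show "emeasure (distr (uniform_measure M {}) (count_space UNIV) h) B = emeasure (null_measure (count_space UNIV)) B"
            using hm' by (simp add: emeasure_distr uniform_measure_def emeasure_density)
        qed simp
        show ?thesis using True nonneg
          by (intro exI[of _ "{}"]) (simp add: nul[OF mechm] renyi_null)
      next
        case False
        define E where "E D = {\<omega> \<in> space M. qhat D \<omega> < gap m k D}" for D
        have Em: "E D \<in> sets M" for D unfolding E_def using meas by measurable
        have Emeas: "1 - \<delta>t \<le> measure M (E D)" if "valid_ds m D" for D
        proof -
          have "space M - {\<omega> \<in> space M. qhat D \<omega> \<ge> gap m k D} = E D" by (auto simp: E_def)
          moreover have "{\<omega> \<in> space M. qhat D \<omega> \<ge> gap m k D} \<in> sets M" using meas by measurable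
          ultimately have "measure M (E D) = 1 - measure M {\<omega> \<in> space M. qhat D \<omega> \<ge> gap m k D}"
            using M.prob_compl by metis
          then show ?thesis using tail[OF that] by simp
        qed
        have nz: "emeasure M (E D) \<noteq> 0" "emeasure M (E D) \<noteq> \<infinity>" if "valid_ds m D" for D
          using Emeas[OF that] False by (auto simp: M.emeasure_eq_measure)
        have dn: "distr (uniform_measure M (E D)) (count_space UNIV) (?mech D) = distr M N (\<lambda>_. None)"
          if "valid_ds m D" "gap m k D \<le> 1" for D
        proof -
          have "distr (uniform_measure M (E D)) (count_space UNIV) (?mech D)
              = distr (uniform_measure M (E D)) (count_space UNIV) (\<lambda>_. None)"
          proof (rule distr_cong_AE)
            show "AE x in uniform_measure M (E D). ?mech D x = None"
              using that(2) by (intro AE_uniform_measureI Em AE_I2) (auto simp: E_def)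
            show "?mech D \<in> measurable (uniform_measure M (E D)) (count_space UNIV)"
              using mechm[of D] by (simp add: measurable_cong_sets)
          qed auto
          also have "\<dots> = distr M N (\<lambda>_. None)" unfolding N_def
            by (intro const_distr prob_space_uniform_measure nz that M.prob_space_axioms)
          finally show ?thesis .
        qed
        show ?thesis
          using Em Emeas[OF vD] Emeas[OF vD'] dn[OF vD gs(1)] dn[OF vD' gs(2)] R0 nonneg
          by (intro exI[of _ "E D"] exI[of _ "E D'"]) simp
      qed
    qed
  qed
qed

end
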